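(* Let $\alpha\in(0,\infty)\setminus\{1\}$. Consider a finite set of flows $\mathcal K$, each flow $k$ having rate $r_k>0$ and being associated to a beam $v_k\in V$; let $\mathcal K(v)=\{k: v_k=v\}$ and assume $\mathcal K(v)\neq\emptyset$ for every $v\in V$. Consider the problem $$\text{maximize } \sum_{v\in V}\sum_{k\in\mathcal K(v)} f_\alpha(r_k\gamma_v\delta_k)\quad\text{subject to } \gamma\in\mathrm{conv}(\mathcal Z),\ \delta\in\Delta,$$ where $f_\alpha(x)=x^{1-\alpha}/(1-\alpha)$, $\Delta=\{\delta\in[0,1]^{\mathcal K}: \sum_{k\in\mathcal K(v)}\delta_k=1 \ \forall v\in V\}$. Define $\phi_v=\big(\sum_{k\in\mathcal K(v)} r_k^{1/\alpha-1}\big)^{\alpha}$ and define $\theta_v,\kappa^\star_v$ recursively from the leaves upward: for $v$ with children set $C(v)=\{v':(v,v')\in E\}$ let $S_v=\sum_{v'\in C(v)}\theta_{v'}$ ($S_v=0$ for a leaf), $$\kappa^\star_v=\Big[1+\Big(\frac{1-\alpha}{\phi_v}S_v\Big)^{1/\alpha}\Big]^{-1},\qquad \theta_v=(\kappa^\star_v)^{1-\alpha}\frac{\phi_v}{1-\alpha}+(1-\kappa^\star_v)^{1-\alpha}S_v$$ (so that for a leaf $\kappa^\star_v=1$ and $\theta_v=\phi_v/(1-\alpha)$). Then the problem has a unique optimal solution $(\delta^\star,\gamma^\star)$, given by $$\delta^\star_k=\frac{r_k^{1/\alpha-1}}{\sum_{k'\in\mathcal K(v_k)} r_{k'}^{1/\alpha-1}},\qquad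 \gamma^\star_v=\kappa^\star_v\prod_{v'\in\mathcal A(v)}(1-\kappa^\star_{v'}).$$
   Context: $G=(V,E)$ is a finite directed rooted tree with vertex set $V=\{1,\dots,|V|\}$ and root $1$, edges oriented from parent to child. For $v\in V$: $\mathcal A(v)$ is the set of strict ancestors of $v$, $\bar{\mathcal A}(v)=\mathcal A(v)\cup\{v\}$, $\mathcal D(v)$ is the set of strict descendants of $v$, $\bar{\mathcal D}(v)=\mathcal D(v)\cup\{v\}$, and $d(v)$ is the number of children of $v$. $\mathcal Z=\{z\in\{0,1\}^{V}: z_v z_{v'}=0 \text{ for all } v\in V,\ v'\in\mathcal A(v)\}$ (admissible sets of simultaneously active beams) and $\mathrm{conv}(\mathcal Z)$ is its convex hull. $\gamma_v$ is the fraction of time beam $v$ is active and $\delta_k$ the fraction of beam $v_k$'s active time given to flow $k$; flow $k$ obtains throughput $r_k\gamma_{v_k}\delta_k$. *)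

theory Defs
  imports "HOL-Analysis.Analysis" "HOL-Library.Extended_Real"
begin

text \<open>Vertex set V = {1..n}, root 1, edges E oriented parent to child.\<close>
definition rooted_tree :: "nat \<Rightarrow> (nat \<times> nat) set \<Rightarrow> bool" where
  "rooted_tree n E \<longleftrightarrow> n \<ge> 1 \<and> E \<subseteq> {1..n} \<times> {1..n}
     \<and> (\<forall>u. (u, 1) \<notin> E)
     \<and> (\<forall>v\<in>{1..n}. v \<noteq> 1 \<longrightarrow> (\<exists>!u. (u, v) \<in> E))
     \<and> (\<forall>v\<in>{1..n}. (1, v) \<in> E\<^sup>*)"

definition anc :: "(nat \<times> nat) set \<Rightarrow> nat \<Rightarrow> nat set" where
  "anc E v = {u. (u, v) \<in> E\<^sup>+}"

definition children :: "(nat \<times> nat) set \<Rightarrow> nat \<Rightarrow> nat set" where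
  "children E v = {v'. (v, v') \<in> E}"

definition Zset :: "nat \<Rightarrow> (nat \<times> nat) set \<Rightarrow> (nat \<Rightarrow> real) set" where
  "Zset n E = {z. (\<forall>v\<in>{1..n}. z v \<in> {0, 1}) \<and> (\<forall>v. v \<notin> {1..n} \<longrightarrow> z v = 0)
                 \<and> (\<forall>v\<in>{1..n}. \<forall>v'\<in>anc E v. z v * z v' = 0)}"

text \<open>gamma (restricted to V) lies in the convex hull of Z (a finite set):
  it is a convex combination of the elements of Z.\<close>
definition in_convZ :: "nat \<Rightarrow> (nat \<times> nat) set \<Rightarrow> (nat \<Rightarrow> real) \<Rightarrow> bool" where
  "in_convZ n E \<gamma> \<longleftrightarrow> (\<exists>\<mu>. (\<forall>z\<in>Zset n E. \<mu> z \<ge> 0) \<and> (\<Sum>z\<in>Zset n E. \<mu> z) = 1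
      \<and> (\<forall>v\<in>{1..n}. \<gamma> v = (\<Sum>z\<in>Zset n E. \<mu> z * z v)))"

definition flows :: "'k set \<Rightarrow> ('k \<Rightarrow> nat) \<Rightarrow> nat \<Rightarrow> 'k set" where
  "flows K vb v = {k\<in>K. vb k = v}"

definition in_Delta :: "nat \<Rightarrow> 'k set \<Rightarrow> ('k \<Rightarrow> nat) \<Rightarrow> ('k \<Rightarrow> real) \<Rightarrow> bool" where
  "in_Delta n K vb \<delta> \<longleftrightarrow> (\<forall>k\<in>K. 0 \<le> \<delta> k \<and> \<delta> k \<le> 1)
      \<and> (\<forall>v\<in>{1..n}. (\<Sum>k\<in>flows K vb v. \<delta> k) = 1)"

definition f_alpha :: "real \<Rightarrow> real \<Rightarrow> ereal" where
  "f_alpha \<alpha> x = (if x = 0 \<and> \<alpha> > 1 then -\<infinity> else ereal (x powr (1 - \<alpha>) / (1 - \<alpha>)))"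

definition objective :: "real \<Rightarrow> nat \<Rightarrow> 'k set \<Rightarrow> ('k \<Rightarrow> nat) \<Rightarrow> ('k \<Rightarrow> real)
    \<Rightarrow> ('k \<Rightarrow> real) \<Rightarrow> (nat \<Rightarrow> real) \<Rightarrow> ereal" where
  "objective \<alpha> n K vb r \<delta> \<gamma> =
     (\<Sum>v\<in>{1..n}. \<Sum>k\<in>flows K vb v. f_alpha \<alpha> (r k * \<gamma> v * \<delta> k))"

definition phi :: "real \<Rightarrow> 'k set \<Rightarrow> ('k \<Rightarrow> nat) \<Rightarrow> ('k \<Rightarrow> real) \<Rightarrow> nat \<Rightarrow> real" where
  "phi \<alpha> K vb r v = (\<Sum>k\<in>flows K vb v. r k powr (1 / \<alpha> - 1)) powr \<alpha>"

end

theory Submission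
  imports Defs
begin



locale rtree =
  fixes n :: nat and E :: "(nat \<times> nat) set"
  assumes tree: "rooted_tree n E"
begin

lemma n1: "n \<ge> 1" using tree unfolding rooted_tree_def by auto
lemma Esub: "E \<subseteq> {1..n} \<times> {1..n}" using tree unfolding rooted_tree_def by auto
lemma no_root_in: "(u, 1) \<notin> E" using tree unfolding rooted_tree_def by auto
lemma reach: "v \<in> {1..n} \<Longrightarrow> (1, v) \<in> E\<^sup>*" using tree unfolding rooted_tree_def by auto
lemma finE: "finite E" using Esub by (rule finite_subset) auto

lemma par_unique: "(u, c) \<in> E \<Longrightarrow> (u', c) \<in> E \<Longrightarrow> u = u'"
proof -
  assume a: "(u, c) \<in> E" "(u', c) \<in> E"
  hence "c \<in> {1..n}" "c \<noteq> 1" using Esub no_root_in by auto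
  with tree show ?thesis unfolding rooted_tree_def using a by metis
qed

lemma trancl_sub: "E\<^sup>+ \<subseteq> {1..n} \<times> {1..n}"
  using Esub trancl_subset_Sigma by blast

lemma no_cycle_reach: "(1, y) \<in> E\<^sup>* \<Longrightarrow> (y, y) \<notin> E\<^sup>+"
proof (induction rule: rtrancl_induct)
  case base
  show ?case
  proof
    assume "(1, 1) \<in> E\<^sup>+"
    then obtain z where "(z, 1) \<in> E" using tranclD2 by metis
    thus False using no_root_in by auto
  qed
next
  case (step y z)
  show ?case
  proof
    assume "(z, z) \<in> E\<^sup>+"
    then obtain w where w: "(z, w) \<in> E\<^sup>*" "(w, z) \<in> E" using tranclD2 by metis
    have "w = y" using par_unique w(2) step(2) by auto
    hence "(y, y) \<in> E\<^sup>+" using w(1) step(2)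
      by (meson rtrancl_into_trancl2)
    thus False using step(3) by auto
  qed
qed

lemma no_cycle: "(x, x) \<notin> E\<^sup>+"
proof
  assume h: "(x, x) \<in> E\<^sup>+"
  hence "x \<in> {1..n}" using trancl_sub by auto
  thus False using no_cycle_reach[OF reach] h by auto
qed

lemma acyc: "acyclic E" unfolding acyclic_def using no_cycle by auto

lemma wf_child: "wf (E\<inverse>)"
  using finite_acyclic_wf_converse[OF finE acyc] .

lemma anc_sub: "anc E v \<subseteq> {1..n}"
  unfolding anc_def using trancl_sub by auto

lemma fin_anc: "finite (anc E v)"
  using anc_sub finite_subset by blast

lemma not_anc_self: "v \<notin> anc E v"
  unfolding anc_def using no_cycle by auto

lemma anc_root: "anc E 1 = {}"
proof -
  { fix u assume "(u, 1) \<in> E\<^sup>+"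
    then obtain z where "(z, 1) \<in> E" using tranclD2 by metis
    hence False using no_root_in by auto }
  thus ?thesis unfolding anc_def by auto
qed

lemma anc_child: "(v, c) \<in> E \<Longrightarrow> anc E c = insert v (anc E v)"
proof -
  assume e: "(v, c) \<in> E"
  { fix u assume "(u, c) \<in> E\<^sup>+"
    then obtain z where z: "(u, z) \<in> E\<^sup>*" "(z, c) \<in> E" using tranclD2 by metis
    hence "z = v" using par_unique e by auto
    hence "u = v \<or> (u, v) \<in> E\<^sup>+" using z(1) by (meson rtranclD) }
  moreover have "(v, c) \<in> E\<^sup>+" using e by auto
  moreover have "(u, v) \<in> E\<^sup>+ \<Longrightarrow> (u, c) \<in> E\<^sup>+" for u using e by auto
  ultimately show ?thesis unfolding anc_def by auto
qed

lemma children_sub: "children E v \<subseteq> {1..n}"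
  unfolding children_def using Esub by auto

lemma fin_children: "finite (children E v)"
  using children_sub finite_subset by blast

definition desc :: "nat \<Rightarrow> nat set" where "desc v = {u. (v, u) \<in> E\<^sup>*}"

lemma desc_sub: "v \<in> {1..n} \<Longrightarrow> desc v \<subseteq> {1..n}"
  unfolding desc_def using trancl_sub by (auto dest: rtranclD)

lemma fin_desc: "v \<in> {1..n} \<Longrightarrow> finite (desc v)"
  using desc_sub finite_subset by blast

lemma desc_root: "desc 1 = {1..n}"
  using desc_sub[of 1] n1 reach unfolding desc_def by auto

lemma desc_unfold: "desc v = insert v (\<Union>c\<in>children E v. desc c)"
proof -
  { fix u assume "(v, u) \<in> E\<^sup>*" "u \<noteq> v"
    hence "\<exists>c. (v, c) \<in> E \<and> (c, u) \<in> E\<^sup>*"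
      by (metis converse_rtranclE) }
  thus ?thesis unfolding desc_def children_def
    by (auto intro: converse_rtrancl_into_rtrancl)
qed

lemma comparable: "(a, u) \<in> E\<^sup>* \<Longrightarrow> (b, u) \<in> E\<^sup>* \<Longrightarrow> (a, b) \<in> E\<^sup>* \<or> (b, a) \<in> E\<^sup>*"
proof (induction arbitrary: b rule: rtrancl_induct)
  case base thus ?case by auto
next
  case (step y u)
  show ?case
  proof (cases "b = u")
    case True thus ?thesis using step by auto
  next
    case False
    then obtain w where w: "(b, w) \<in> E\<^sup>*" "(w, u) \<in> E" using step(4)
      by (metis rtranclE)
    hence "w = y" using par_unique step(2) by auto
    thus ?thesis using step.IH w(1) by auto
  qed
qed

lemma v_notin_desc_child: "c \<in> children E v \<Longrightarrow> v \<notin> desc c"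
  unfolding children_def desc_def using no_cycle
  by (meson mem_Collect_eq rtrancl_into_trancl2)

lemma desc_disjoint: "c \<in> children E v \<Longrightarrow> c' \<in> children E v \<Longrightarrow> c \<noteq> c' \<Longrightarrow> desc c \<inter> desc c' = {}"
proof (rule ccontr)
  assume c: "c \<in> children E v" "c' \<in> children E v" "c \<noteq> c'" "desc c \<inter> desc c' \<noteq> {}"
  then obtain u where "(c, u) \<in> E\<^sup>*" "(c', u) \<in> E\<^sup>*" unfolding desc_def by auto
  hence "(c, c') \<in> E\<^sup>* \<or> (c', c) \<in> E\<^sup>*" using comparable by auto
  moreover
  { fix a b assume ab: "a \<in> children E v" "b \<in> children E v" "a \<noteq> b" "(a, b) \<in> E\<^sup>*"
    hence "(a, b) \<in> E\<^sup>+" by (meson rtranclD)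
    then obtain w where w: "(a, w) \<in> E\<^sup>*" "(w, b) \<in> E" using tranclD2 by metis
    hence "w = v" using par_unique ab(2) unfolding children_def by auto
    hence "(v, v) \<in> E\<^sup>+" using w(1) ab(1) unfolding children_def
      by (meson mem_Collect_eq rtrancl_into_trancl2)
    hence False using no_cycle by auto }
  ultimately show False using c by metis
qed

lemma desc_strict_anc: "u \<in> desc v \<Longrightarrow> u \<noteq> v \<Longrightarrow> v \<in> anc E u"
  unfolding desc_def anc_def by (auto dest: rtranclD)

lemma child_anc: "(u, v) \<in> E\<^sup>+ \<Longrightarrow> children E u \<noteq> {}"
  unfolding children_def by (metis converse_tranclE empty_iff mem_Collect_eq)

lemma Ein: "(a, b) \<in> E \<Longrightarrow> a \<in> {1..n} \<and> b \<in> {1..n}" using Esub by auto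

lemma desc_split: "v \<in> {1..n} \<Longrightarrow> sum f (desc v) = f v + (\<Sum>c\<in>children E v. sum f (desc c))"
proof -
  assume v: "v \<in> {1..n}"
  define U where "U = (\<Union>c\<in>children E v. desc c)"
  have dU: "desc v = insert v U" unfolding U_def by (rule desc_unfold)
  have fU: "finite U" using fin_desc[OF v] dU by auto
  have vU: "v \<notin> U" unfolding U_def using v_notin_desc_child by auto
  have "sum f (desc v) = f v + sum f U" unfolding dU using fU vU by simp
  also have "sum f U = (\<Sum>c\<in>children E v. sum f (desc c))" unfolding U_def
  proof (rule sum.UNION_disjoint[OF fin_children])
    show "\<forall>c\<in>children E v. finite (desc c)" using fin_desc children_sub by blast
    show "\<forall>c\<in>children E v. \<forall>c'\<in>children E v. c \<noteq> c' \<longrightarrow> desc c \<inter> desc c' = {}"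
      using desc_disjoint by auto
  qed
  finally show ?thesis .
qed

end



lemma tangent1:
  fixes \<beta> s :: real
  assumes b: "\<beta> < 1" "\<beta> \<noteq> 0" and s: "s > 0" "s \<noteq> 1"
  shows "s powr \<beta> / \<beta> < 1 / \<beta> + (s - 1)"
proof -
  define H where "H = (\<lambda>s::real. 1 / \<beta> + s - 1 - s powr \<beta> / \<beta>)"
  have der: "DERIV H x :> 1 - x powr (\<beta> - 1)" if "x > 0" for x
  proof -
    have "DERIV (\<lambda>s. s powr \<beta>) x :> \<beta> * x powr (\<beta> - 1)"
      using has_real_derivative_powr[OF that] .
    hence "DERIV (\<lambda>s. s powr \<beta> / \<beta>) x :> \<beta> * x powr (\<beta> - 1) / \<beta>"
      by (rule DERIV_cdivide)
    hence "DERIV H x :> 0 + 1 - 0 - \<beta> * x powr (\<beta> - 1) / \<beta>"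
      unfolding H_def
      by (intro DERIV_diff DERIV_add DERIV_const DERIV_ident) 
    thus ?thesis using b by simp
  qed
  have cont: "continuous_on {a..b} H" if "a > 0" for a b
  proof (intro continuous_at_imp_continuous_on ballI)
    fix x assume "x \<in> {a..b}"
    hence "x > 0" using that by auto
    thus "isCont H x" using der DERIV_isCont by blast
  qed
  have H1: "H 1 = 0" unfolding H_def by simp
  have "H s > 0"
  proof (cases "s < 1")
    case True
    have "H s > H 1"
    proof (rule DERIV_neg_imp_decreasing_open[OF True _ cont[OF s(1)]])
      fix x assume x: "s < x" "x < 1"
      have "x > 0" using x s by auto
      have "1 powr (\<beta> - 1) < x powr (\<beta> - 1)"
        using powr_less_mono2_neg[of "\<beta> - 1" x 1] b x \<open>x > 0\<close> by auto
      thus "\<exists>y. DERIV H x :> y \<and> y < 0" using der[OF \<open>x > 0\<close>] by (intro exI[of _ "1 - x powr (\<beta> - 1)"]) auto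
    qed
    thus ?thesis using H1 by auto
  next
    case False
    hence "1 < s" using s by auto
    have "H 1 < H s"
    proof (rule DERIV_pos_imp_increasing_open[OF \<open>1 < s\<close> _ cont])
      fix x assume x: "1 < x" "x < s"
      have "x powr (\<beta> - 1) < 1 powr (\<beta> - 1)"
        using powr_less_mono2_neg[of "\<beta> - 1" 1 x] b x by auto
      thus "\<exists>y. DERIV H x :> y \<and> y > 0" using der[of x] x by (intro exI[of _ "1 - x powr (\<beta> - 1)"]) auto
    qed auto
    thus ?thesis using H1 by auto
  qed
  thus ?thesis unfolding H_def by auto
qed

lemma tangent:
  fixes \<beta> x y :: real
  assumes b: "\<beta> < 1" "\<beta> \<noteq> 0" and x: "x > 0" and y: "y \<ge> 0" "\<beta> < 0 \<Longrightarrow> y > 0"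
    and ne: "y \<noteq> x"
  shows "y powr \<beta> / \<beta> < x powr \<beta> / \<beta> + x powr (\<beta> - 1) * (y - x)"
proof (cases "y = 0")
  case True
  hence "\<beta> > 0" using y b by force
  have "x powr \<beta> / \<beta> - x powr (\<beta> - 1) * x = x powr \<beta> * (1 / \<beta> - 1)"
    using x by (simp add: powr_diff field_simps)
  moreover have "x powr \<beta> * (1 / \<beta> - 1) > 0" using x b \<open>\<beta> > 0\<close> by (simp add: field_simps)
  ultimately show ?thesis using True by simp
next
  case False
  hence yp: "y > 0" using y by auto
  define s where "s = y / x"
  have s: "s > 0" "s \<noteq> 1" using yp x ne unfolding s_def by auto
  have ys: "y = x * s" using x unfolding s_def by auto
  have "s powr \<beta> / \<beta> < 1 / \<beta> + (s - 1)" using tangent1[OF b s] .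
  hence "x powr \<beta> * (s powr \<beta> / \<beta>) < x powr \<beta> * (1 / \<beta> + (s - 1))"
    using x by (intro mult_strict_left_mono) auto
  moreover have "y powr \<beta> = x powr \<beta> * s powr \<beta>" using ys x s by (simp add: powr_mult)
  moreover have "x powr (\<beta> - 1) * (y - x) = x powr \<beta> * (s - 1)"
    using x ys by (simp add: powr_diff field_simps)
  ultimately show ?thesis by (simp add: field_simps)
qed

lemma tangent_le:
  fixes \<beta> x y :: real
  assumes b: "\<beta> < 1" "\<beta> \<noteq> 0" and x: "x > 0" and y: "y \<ge> 0" "\<beta> < 0 \<Longrightarrow> y > 0"
  shows "y powr \<beta> / \<beta> \<le> x powr \<beta> / \<beta> + x powr (\<beta> - 1) * (y - x)"
  using tangent[OF assms] by (cases "y = x") force+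




locale setting = rtree n E for n E +
  fixes \<alpha> :: real and K :: "'k set" and r :: "'k \<Rightarrow> real" and vb :: "'k \<Rightarrow> nat"
    and \<theta> \<kappa> :: "nat \<Rightarrow> real"
  assumes alpha: "\<alpha> > 0" "\<alpha> \<noteq> 1"
    and finK: "finite K"
    and rpos: "\<forall>k\<in>K. r k > 0"
    and vbV: "\<forall>k\<in>K. vb k \<in> {1..n}"
    and nonempty: "\<forall>v\<in>{1..n}. flows K vb v \<noteq> {}"
    and kappa_def: "\<forall>v\<in>{1..n}. \<kappa> v = 1 / (1 + ((1 - \<alpha>) / phi \<alpha> K vb r v
                       * (\<Sum>v'\<in>children E v. \<theta> v')) powr (1 / \<alpha>))"
    and theta_def: "\<forall>v\<in>{1..n}. \<theta> v = \<kappa> v powr (1 - \<alpha>) * phi \<alpha> K vb r v / (1 - \<alpha>)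
                       + (1 - \<kappa> v) powr (1 - \<alpha>) * (\<Sum>v'\<in>children E v. \<theta> v')"
begin

definition "cc v = (\<Sum>k\<in>flows K vb v. r k powr (1 / \<alpha> - 1))"
definition "S v = (\<Sum>v'\<in>children E v. \<theta> v')"

lemma fin_flows: "finite (flows K vb v)"
  using finK unfolding flows_def by auto

lemma cc_pos: "v \<in> {1..n} \<Longrightarrow> cc v > 0"
  unfolding cc_def using nonempty fin_flows rpos
  by (intro sum_pos) (auto simp: flows_def)

lemma phi_eq: "phi \<alpha> K vb r v = cc v powr \<alpha>"
  unfolding phi_def cc_def ..

lemma phi_pos: "v \<in> {1..n} \<Longrightarrow> phi \<alpha> K vb r v > 0"
proof -
  assume "v \<in> {1..n}" hence "cc v > 0" by (rule cc_pos)
  thus ?thesis unfolding phi_eq by simp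
qed

lemma kappa_step:
  fixes ph s k t :: real
  assumes ph: "ph > 0" and s: "(1 - \<alpha>) * s \<ge> 0"
    and k: "k = 1 / (1 + ((1 - \<alpha>) / ph * s) powr (1 / \<alpha>))"
    and t: "t = k powr (1 - \<alpha>) * ph / (1 - \<alpha>) + (1 - k) powr (1 - \<alpha>) * s"
  shows "(1 - \<alpha>) * t > 0 \<and> (1 - \<alpha>) * t = ph * k powr (-\<alpha>) \<and> 0 < k \<and> k \<le> 1
     \<and> (s \<noteq> 0 \<longrightarrow> k < 1)
     \<and> (1 - \<alpha>) * s * (1 - k) powr (-\<alpha>) \<le> ph * k powr (-\<alpha>)
     \<and> (s \<noteq> 0 \<longrightarrow> (1 - \<alpha>) * s * (1 - k) powr (-\<alpha>) = ph * k powr (-\<alpha>))"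
proof -
  define a where "a = (1 - \<alpha>) / ph * s"
  define b where "b = a powr (1 / \<alpha>)"
  have a0: "a \<ge> 0" unfolding a_def using ph s
    by (metis divide_nonneg_pos times_divide_eq_left mult.commute)
  have b0: "b \<ge> 0" unfolding b_def by simp
  have kb: "k = 1 / (1 + b)" using k unfolding a_def b_def .
  have al: "\<alpha> > 0" "\<alpha> \<noteq> 1" using alpha by auto
  show ?thesis
  proof (cases "s = 0")
    case True
    hence "b = 0" unfolding b_def a_def by simp
    hence "k = 1" using kb by simp
    thus ?thesis using True t ph al by (auto simp: field_simps)
  next
    case False
    hence "a \<noteq> 0" unfolding a_def using ph al by auto
    hence ap: "a > 0" using a0 by auto
    hence bp: "b > 0" unfolding b_def by simp
    have ba: "b powr \<alpha> = a" unfolding b_def using ap al by (simp add: powr_powr)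
    have sa: "s = a * ph / (1 - \<alpha>)" unfolding a_def using ph al by (simp add: field_simps)
    have k1: "1 - k = b / (1 + b)" using kb bp by (simp add: field_simps)
    have kp: "k powr x = (1 + b) powr (-x)" for x
      using kb bp by (simp add: powr_divide powr_minus_divide)
    have k1p: "(1 - k) powr x = b powr x / (1 + b) powr x" for x
      using k1 bp by (simp add: powr_divide)
    have e1: "(1 - \<alpha>) * t = ph * (1 + b) powr \<alpha>"
    proof -
      have as: "(1 - \<alpha>) * s = a * ph" unfolding sa using al by simp
      have "(1 - \<alpha>) * t = ph * k powr (1 - \<alpha>) + (1 - k) powr (1 - \<alpha>) * ((1 - \<alpha>) * s)"
        unfolding t using al by (simp add: field_simps)
      also have "\<dots> = ph * k powr (1 - \<alpha>) + (1 - k) powr (1 - \<alpha>) * (b powr \<alpha> * ph)"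
        unfolding as ba ..
      also have "(1 - k) powr (1 - \<alpha>) * (b powr \<alpha> * ph) = ph * (b powr (1 - \<alpha>) * b powr \<alpha>) / (1 + b) powr (1 - \<alpha>)"
        unfolding k1p by simp
      also have "b powr (1 - \<alpha>) * b powr \<alpha> = b" using bp by (simp add: powr_add[symmetric])
      also have "k powr (1 - \<alpha>) = 1 / (1 + b) powr (1 - \<alpha>)" unfolding kp
        by (metis minus_diff_eq powr_minus_divide)
      finally have "(1 - \<alpha>) * t = ph * ((1 + b) / (1 + b) powr (1 - \<alpha>))" by (simp add: add_divide_distrib algebra_simps)
      also have "(1 + b) / (1 + b) powr (1 - \<alpha>) = (1 + b) powr \<alpha>"
        using bp by (simp add: powr_diff)
      finally show ?thesis by simp
    qed
    have e2: "(1 - \<alpha>) * s * (1 - k) powr (-\<alpha>) = ph * (1 + b) powr \<alpha>"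
    proof -
      have "(1 - \<alpha>) * s * (1 - k) powr (-\<alpha>) = a * ph * (b powr (-\<alpha>) / (1 + b) powr (-\<alpha>))"
        unfolding k1p sa using al by simp
      also have "\<dots> = ph * (a * b powr (-\<alpha>)) / (1 + b) powr (-\<alpha>)" by simp
      also have "a * b powr (-\<alpha>) = 1" using ba bp ap by (simp add: powr_minus field_simps)
      finally show ?thesis using bp by (simp add: powr_minus field_simps)
    qed
    have "k > 0" "k < 1" using kb bp by auto
    thus ?thesis using e1 e2 kp[of "-\<alpha>"] ph bp by auto
  qed
qed

lemma L: "v \<in> {1..n} \<Longrightarrow> (1 - \<alpha>) * \<theta> v > 0 \<and> (1 - \<alpha>) * \<theta> v = phi \<alpha> K vb r v * \<kappa> v powr (-\<alpha>) \<and> 0 < \<kappa> v \<and> \<kappa> v \<le> 1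
     \<and> (children E v \<noteq> {} \<longrightarrow> \<kappa> v < 1)
     \<and> (1 - \<alpha>) * S v * (1 - \<kappa> v) powr (-\<alpha>) \<le> phi \<alpha> K vb r v * \<kappa> v powr (-\<alpha>)"
proof (induction v rule: wf_induct_rule[OF wf_child])
  case (1 v)
  have IH: "c \<in> children E v \<Longrightarrow> (1 - \<alpha>) * \<theta> c > 0" for c
  proof -
    assume "c \<in> children E v"
    hence e: "(v, c) \<in> E" by (simp add: children_def)
    hence c: "c \<in> {1..n}" using Ein by auto
    have "(c, v) \<in> E\<inverse>" using e by simp
    from 1(1)[OF this] c show ?thesis by blast
  qed
  have sS: "(1 - \<alpha>) * S v = (\<Sum>c\<in>children E v. (1 - \<alpha>) * \<theta> c)"
    unfolding S_def by (simp add: sum_distrib_left)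
  have s0: "(1 - \<alpha>) * S v \<ge> 0" unfolding sS using IH by (intro sum_nonneg) (auto intro: less_imp_le)
  have s1: "children E v \<noteq> {} \<Longrightarrow> S v \<noteq> 0"
  proof -
    assume "children E v \<noteq> {}"
    hence "(1 - \<alpha>) * S v > 0" unfolding sS using IH fin_children by (intro sum_pos) auto
    thus "S v \<noteq> 0" by auto
  qed
  have ks: "\<kappa> v = 1 / (1 + ((1 - \<alpha>) / phi \<alpha> K vb r v * S v) powr (1 / \<alpha>))"
    using kappa_def 1(2) unfolding S_def by auto
  have ts: "\<theta> v = \<kappa> v powr (1 - \<alpha>) * phi \<alpha> K vb r v / (1 - \<alpha>) + (1 - \<kappa> v) powr (1 - \<alpha>) * S v"
    using theta_def 1(2) unfolding S_def by auto
  show ?case using kappa_step[OF phi_pos[OF 1(2)] s0 ks ts] s1 by blast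
qed

definition "Pr v = (\<Prod>u\<in>anc E v. 1 - \<kappa> u)"
definition "gs v = \<kappa> v * Pr v"
definition "w v = phi \<alpha> K vb r v * gs v powr (-\<alpha>)"

lemma Pr_pos: "v \<in> {1..n} \<Longrightarrow> Pr v > 0"
  unfolding Pr_def
proof (intro prod_pos)
  fix u assume "u \<in> anc E v"
  hence "u \<in> {1..n}" "children E u \<noteq> {}" using anc_sub[of v] child_anc[of u v] unfolding anc_def by auto
  thus "0 < 1 - \<kappa> u" using L by auto
qed

lemma gs_pos: "v \<in> {1..n} \<Longrightarrow> gs v > 0"
  unfolding gs_def using Pr_pos L by auto

lemma Pr_root: "Pr 1 = 1" unfolding Pr_def anc_root by simp

lemma Pr_child: "(v, c) \<in> E \<Longrightarrow> Pr c = Pr v * (1 - \<kappa> v)"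
  unfolding Pr_def anc_child using not_anc_self fin_anc by simp

lemma w_eq: "c \<in> {1..n} \<Longrightarrow> w c = (1 - \<alpha>) * \<theta> c * Pr c powr (-\<alpha>)"
  unfolding w_def gs_def using L[of c] Pr_pos[of c] by (simp add: powr_mult)

lemma flow: "v \<in> {1..n} \<Longrightarrow> (\<Sum>c\<in>children E v. w c) \<le> w v"
proof -
  assume v: "v \<in> {1..n}"
  have k: "0 < \<kappa> v" "\<kappa> v \<le> 1" using L[OF v] by auto
  have "(\<Sum>c\<in>children E v. w c) = (\<Sum>c\<in>children E v. (1 - \<alpha>) * \<theta> c * (Pr v powr (-\<alpha>) * (1 - \<kappa> v) powr (-\<alpha>)))"
  proof (intro sum.cong refl)
    fix c assume c: "c \<in> children E v"
    hence "(v, c) \<in> E" by (simp add: children_def)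
    hence "c \<in> {1..n}" "(v, c) \<in> E" using Ein by auto
    thus "w c = (1 - \<alpha>) * \<theta> c * (Pr v powr (-\<alpha>) * (1 - \<kappa> v) powr (-\<alpha>))"
      using w_eq Pr_child Pr_pos[OF v] k by (simp add: powr_mult)
  qed
  also have "\<dots> = (1 - \<alpha>) * S v * (1 - \<kappa> v) powr (-\<alpha>) * Pr v powr (-\<alpha>)"
    unfolding S_def by (simp add: sum_distrib_left sum_distrib_right algebra_simps)
  also have "\<dots> \<le> phi \<alpha> K vb r v * \<kappa> v powr (-\<alpha>) * Pr v powr (-\<alpha>)"
    using L[OF v] by (intro mult_right_mono) auto
  also have "\<dots> = w v" unfolding w_def gs_def using k Pr_pos[OF v] by (simp add: powr_mult)
  finally show ?thesis .
qed

lemma w_pos: "v \<in> {1..n} \<Longrightarrow> w v > 0"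
proof -
  assume v: "v \<in> {1..n}"
  have "gs v powr (-\<alpha>) > 0" using gs_pos[OF v] by simp
  thus ?thesis unfolding w_def using phi_pos[OF v] by simp
qed

lemma antichain_bound:
  assumes z: "z \<in> Zset n E"
  shows "v \<in> {1..n} \<Longrightarrow> (\<Sum>u\<in>desc v. w u * z u) \<le> w v"
proof (induction v rule: wf_induct_rule[OF wf_child])
  case (1 v)
  have z01: "\<And>u. u \<in> {1..n} \<Longrightarrow> z u = 0 \<or> z u = 1" using z unfolding Zset_def by auto
  have zanti: "\<And>u u'. u \<in> {1..n} \<Longrightarrow> u' \<in> anc E u \<Longrightarrow> z u * z u' = 0" using z unfolding Zset_def by auto
  have fD: "finite (desc v)" using fin_desc 1(2) .
  show ?case
  proof (cases "z v = 1")
    case True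
    have "(\<Sum>u\<in>desc v. w u * z u) = (\<Sum>u\<in>{v}. w u * z u)"
    proof (rule sum.mono_neutral_right[OF fD])
      show "{v} \<subseteq> desc v" unfolding desc_def by auto
      show "\<forall>i\<in>desc v - {v}. w i * z i = 0"
      proof
        fix u assume u: "u \<in> desc v - {v}"
        hence "v \<in> anc E u" "u \<in> {1..n}" using desc_strict_anc desc_sub[OF 1(2)] by auto
        hence "z u * z v = 0" using zanti by auto
        thus "w u * z u = 0" using True by simp
      qed
    qed
    thus ?thesis using True by simp
  next
    case False
    hence zv: "z v = 0" using z01 1(2) by auto
    have "(\<Sum>u\<in>desc v. w u * z u) = w v * z v + (\<Sum>c\<in>children E v. \<Sum>u\<in>desc c. w u * z u)"
      by (rule desc_split[OF 1(2)])
    also have "\<dots> = (\<Sum>c\<in>children E v. \<Sum>u\<in>desc c. w u * z u)" using zv by simp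
    also have "\<dots> \<le> (\<Sum>c\<in>children E v. w c)"
    proof (rule sum_mono)
      fix c assume "c \<in> children E v"
      hence e: "(v, c) \<in> E" by (simp add: children_def)
      hence c: "c \<in> {1..n}" using Ein by auto
      have "(c, v) \<in> E\<inverse>" using e by simp
      from 1(1)[OF this] c show "(\<Sum>u\<in>desc c. w u * z u) \<le> w c" by blast
    qed
    also have "\<dots> \<le> w v" using flow 1(2) .
    finally show ?thesis using zv by simp
  qed
qed

lemma value_eq:
  shows "v \<in> {1..n} \<Longrightarrow> (\<Sum>u\<in>desc v. phi \<alpha> K vb r u * gs u powr (1 - \<alpha>)) = (1 - \<alpha>) * \<theta> v * Pr v powr (1 - \<alpha>)"
proof (induction v rule: wf_induct_rule[OF wf_child])
  case (1 v)
  have fD: "finite (desc v)" using fin_desc 1(2) .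
  have k: "0 < \<kappa> v" "\<kappa> v \<le> 1" using L[OF 1(2)] by auto
  have Pv: "Pr v > 0" using Pr_pos 1(2) .
  have "(\<Sum>u\<in>desc v. phi \<alpha> K vb r u * gs u powr (1 - \<alpha>)) = phi \<alpha> K vb r v * gs v powr (1 - \<alpha>) + (\<Sum>c\<in>children E v. \<Sum>u\<in>desc c. phi \<alpha> K vb r u * gs u powr (1 - \<alpha>))"
    by (rule desc_split[OF 1(2)])
  also have "(\<Sum>c\<in>children E v. \<Sum>u\<in>desc c. phi \<alpha> K vb r u * gs u powr (1 - \<alpha>)) = (\<Sum>c\<in>children E v. (1 - \<alpha>) * \<theta> c * (Pr v powr (1 - \<alpha>) * (1 - \<kappa> v) powr (1 - \<alpha>)))"
  proof (intro sum.cong refl)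
    fix c assume c: "c \<in> children E v"
    hence "(v, c) \<in> E" by (simp add: children_def)
    hence "c \<in> {1..n}" "(v, c) \<in> E" using Ein by auto
    have "(c, v) \<in> E\<inverse>" using \<open>(v, c) \<in> E\<close> by simp
    from 1(1)[OF this] \<open>c \<in> {1..n}\<close> have "(\<Sum>u\<in>desc c. phi \<alpha> K vb r u * gs u powr (1 - \<alpha>)) = (1 - \<alpha>) * \<theta> c * Pr c powr (1 - \<alpha>)" by blast
    thus "(\<Sum>u\<in>desc c. phi \<alpha> K vb r u * gs u powr (1 - \<alpha>)) = (1 - \<alpha>) * \<theta> c * (Pr v powr (1 - \<alpha>) * (1 - \<kappa> v) powr (1 - \<alpha>))"
      using Pr_child[OF \<open>(v, c) \<in> E\<close>] Pv k by (simp add: powr_mult)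
  qed
  also have "\<dots> = (1 - \<alpha>) * S v * (1 - \<kappa> v) powr (1 - \<alpha>) * Pr v powr (1 - \<alpha>)"
    unfolding S_def by (simp add: sum_distrib_left sum_distrib_right algebra_simps)
  finally have A: "(\<Sum>u\<in>desc v. phi \<alpha> K vb r u * gs u powr (1 - \<alpha>)) =
     phi \<alpha> K vb r v * gs v powr (1 - \<alpha>) + (1 - \<alpha>) * S v * (1 - \<kappa> v) powr (1 - \<alpha>) * Pr v powr (1 - \<alpha>)" .
  have B: "gs v powr (1 - \<alpha>) = \<kappa> v powr (1 - \<alpha>) * Pr v powr (1 - \<alpha>)"
    unfolding gs_def using k Pv by (simp add: powr_mult)
  have C: "\<theta> v = \<kappa> v powr (1 - \<alpha>) * phi \<alpha> K vb r v / (1 - \<alpha>) + (1 - \<kappa> v) powr (1 - \<alpha>) * S v"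
    using theta_def 1(2) unfolding S_def by auto
  have D: "(1 - \<alpha>) * \<theta> v = \<kappa> v powr (1 - \<alpha>) * phi \<alpha> K vb r v + (1 - \<alpha>) * (1 - \<kappa> v) powr (1 - \<alpha>) * S v"
    unfolding C using alpha by (simp add: field_simps)
  show ?case unfolding A B D by (simp add: algebra_simps)
qed

lemma total_value: "(\<Sum>u\<in>{1..n}. phi \<alpha> K vb r u * gs u powr (1 - \<alpha>)) = w 1"
proof -
  have r: "1 \<in> {1..n}" using n1 by auto
  have "(\<Sum>u\<in>{1..n}. phi \<alpha> K vb r u * gs u powr (1 - \<alpha>)) = (1 - \<alpha>) * \<theta> 1"
    using value_eq[OF r] unfolding desc_root Pr_root by simp
  also have "\<dots> = w 1" unfolding w_def gs_def Pr_root using L[OF r] by simp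
  finally show ?thesis .
qed

lemma total_w: "(\<Sum>u\<in>{1..n}. w u * gs u) = w 1"
proof -
  have "(\<Sum>u\<in>{1..n}. w u * gs u) = (\<Sum>u\<in>{1..n}. phi \<alpha> K vb r u * gs u powr (1 - \<alpha>))"
  proof (intro sum.cong refl)
    fix u assume "u \<in> {1..n}"
    hence "gs u > 0" by (rule gs_pos)
    thus "w u * gs u = phi \<alpha> K vb r u * gs u powr (1 - \<alpha>)"
      unfolding w_def by (simp add: powr_diff powr_minus field_simps)
  qed
  thus ?thesis using total_value by simp
qed

end



context setting begin

definition "Bs = PiE {1..n} (\<lambda>_. (UNIV::bool set))"
definition "zmap b = (\<lambda>v. if v \<in> {1..n} \<and> b v \<and> (\<forall>u\<in>anc E v. \<not> b u) then 1 else (0::real))"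
definition "wt b = (\<Prod>v\<in>{1..n}. if b v then \<kappa> v else 1 - \<kappa> v)"
definition "mu z = (\<Sum>b\<in>{b\<in>Bs. zmap b = z}. wt b)"

lemma finBs: "finite Bs" unfolding Bs_def by (intro finite_PiE) auto

lemma zmap_in: "zmap b \<in> Zset n E"
proof -
  { fix v v' assume v: "v \<in> {1..n}" and v': "v' \<in> anc E v"
    have "zmap b v * zmap b v' = 0"
    proof (cases "zmap b v = 0")
      case False
      hence "\<not> b v'" using v' unfolding zmap_def by (auto split: if_splits)
      thus ?thesis unfolding zmap_def by auto
    qed simp }
  thus ?thesis unfolding Zset_def by (auto simp: zmap_def)
qed

lemma finZ: "finite (Zset n E)"
proof -
  have "Zset n E \<subseteq> (\<lambda>A v. if v \<in> A then 1 else (0::real)) ` Pow {1..n}"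
  proof
    fix z assume z: "z \<in> Zset n E"
    have "z = (\<lambda>v. if v \<in> {v\<in>{1..n}. z v = 1} then 1 else 0)"
    proof
      fix v show "z v = (if v \<in> {v\<in>{1..n}. z v = 1} then 1 else 0)"
        using z unfolding Zset_def by (cases "v \<in> {1..n}") auto
    qed
    thus "z \<in> (\<lambda>A v. if v \<in> A then 1 else (0::real)) ` Pow {1..n}" by blast
  qed
  thus ?thesis by (rule finite_subset) auto
qed

lemma kap01: "v \<in> {1..n} \<Longrightarrow> 0 \<le> \<kappa> v \<and> \<kappa> v \<le> 1" using L by force

lemma key: "(\<Sum>z\<in>Zset n E. mu z * g z) = (\<Sum>b\<in>Bs. wt b * g (zmap b))"
proof -
  have "(\<Sum>z\<in>Zset n E. mu z * g z) = (\<Sum>z\<in>Zset n E. \<Sum>b\<in>{b\<in>Bs. zmap b = z}. wt b * g (zmap b))"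
    unfolding mu_def sum_distrib_right by (intro sum.cong refl) auto
  also have "\<dots> = (\<Sum>b\<in>Bs. wt b * g (zmap b))"
    using sum.group[OF finBs finZ, of zmap "\<lambda>b. wt b * g (zmap b)"] zmap_in by auto
  finally show ?thesis .
qed

lemma sum_bool: "(\<Sum>x\<in>(UNIV::bool set). f x) = f True + (f False :: real)"
  by (simp add: UNIV_bool)

lemma sum_wt: "(\<Sum>b\<in>Bs. wt b) = 1"
proof -
  have "(\<Sum>b\<in>Bs. wt b) = (\<Prod>v\<in>{1..n}. \<Sum>x\<in>(UNIV::bool set). if x then \<kappa> v else 1 - \<kappa> v)"
    unfolding Bs_def wt_def by (subst prod_sum_PiE) auto
  also have "\<dots> = 1" by (simp add: sum_bool)
  finally show ?thesis .
qed

lemma marg: assumes v: "v \<in> {1..n}" shows "(\<Sum>b\<in>Bs. wt b * zmap b v) = gs v"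
proof -
  define h where "h u x = (if u = v then (if x then \<kappa> v else 0) else if u \<in> anc E v then (if x then 0 else 1 - \<kappa> u) else (if x then \<kappa> u else 1 - \<kappa> u))" for u x
  have nv: "v \<notin> anc E v" by (rule not_anc_self)
  have pw: "wt b * zmap b v = (\<Prod>u\<in>{1..n}. h u (b u))" for b
  proof (cases "zmap b v = 1")
    case True
    hence bb: "b v" "\<forall>u\<in>anc E v. \<not> b u" unfolding zmap_def by (auto split: if_splits)
    show ?thesis unfolding True wt_def using bb nv
      by (simp, intro prod.cong refl) (auto simp: h_def)
  next
    case False
    note zne = this
    hence z0: "zmap b v = 0" unfolding zmap_def by (auto split: if_splits)
    have "\<exists>u\<in>{1..n}. h u (b u) = 0"
    proof (cases "b v")
      case False thus ?thesis using v by (intro bexI[of _ v]) (auto simp: h_def)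
    next
      case True
      have "\<not> (\<forall>u\<in>anc E v. \<not> b u)" using zne True v unfolding zmap_def by (auto split: if_splits)
      then obtain u where "u \<in> anc E v" "b u" by auto
      moreover have "u \<in> {1..n}" using anc_sub[of v] \<open>u \<in> anc E v\<close> by blast
      ultimately show ?thesis using nv by (intro bexI[of _ u]) (auto simp: h_def)
    qed
    thus ?thesis using z0 by simp
  qed
  have "(\<Sum>b\<in>Bs. wt b * zmap b v) = (\<Sum>b\<in>Bs. \<Prod>u\<in>{1..n}. h u (b u))" using pw by simp
  also have "\<dots> = (\<Prod>u\<in>{1..n}. \<Sum>x\<in>(UNIV::bool set). h u x)"
    unfolding Bs_def by (subst prod_sum_PiE) auto
  also have "\<dots> = (\<Prod>u\<in>{1..n}. if u = v then \<kappa> v else if u \<in> anc E v then 1 - \<kappa> u else 1)"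
    by (intro prod.cong refl) (auto simp: sum_bool h_def)
  also have "\<dots> = \<kappa> v * (\<Prod>u\<in>{1..n} - {v}. if u \<in> anc E v then 1 - \<kappa> u else 1)"
    using v by (subst prod.remove[of _ v]) auto
  also have "(\<Prod>u\<in>{1..n} - {v}. if u \<in> anc E v then 1 - \<kappa> u else 1) = (\<Prod>u\<in>({1..n} - {v}) \<inter> anc E v. 1 - \<kappa> u)"
    by (simp add: prod.inter_restrict)
  also have "({1..n} - {v}) \<inter> anc E v = anc E v" using anc_sub nv by auto
  finally show ?thesis unfolding gs_def Pr_def .
qed

lemma convZ: "in_convZ n E gs"
  unfolding in_convZ_def
proof (intro exI[of _ mu] conjI ballI)
  fix z show "0 \<le> mu z" unfolding mu_def wt_def using kap01
    by (intro sum_nonneg prod_nonneg) auto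
next
  show "(\<Sum>z\<in>Zset n E. mu z) = 1" using key[of "\<lambda>_. 1"] sum_wt by simp
next
  fix v assume "v \<in> {1..n}"
  thus "gs v = (\<Sum>z\<in>Zset n E. mu z * z v)" using key[of "\<lambda>z. z v"] marg by simp
qed

end



context setting begin

definition "ds k = r k powr (1 / \<alpha> - 1) / cc (vb k)"

lemma flows_mem: "k \<in> flows K vb v \<longleftrightarrow> k \<in> K \<and> vb k = v" unfolding flows_def by auto

lemma ds_pos: "k \<in> K \<Longrightarrow> ds k > 0"
  unfolding ds_def using rpos vbV cc_pos by auto

lemma ds_sum: "v \<in> {1..n} \<Longrightarrow> (\<Sum>k\<in>flows K vb v. ds k) = 1"
proof -
  assume v: "v \<in> {1..n}"
  have "(\<Sum>k\<in>flows K vb v. ds k) = (\<Sum>k\<in>flows K vb v. r k powr (1 / \<alpha> - 1) / cc v)"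
    unfolding ds_def by (intro sum.cong refl) (auto simp: flows_mem)
  also have "\<dots> = (\<Sum>k\<in>flows K vb v. r k powr (1 / \<alpha> - 1)) / cc v" by (simp add: sum_divide_distrib)
  also have "\<dots> = cc v / cc v" unfolding cc_def ..
  finally show ?thesis using cc_pos[OF v] by simp
qed

lemma Delta_ds: "in_Delta n K vb ds"
  unfolding in_Delta_def
proof (intro conjI ballI)
  fix k assume k: "k \<in> K"
  show "0 \<le> ds k" using ds_pos[OF k] by simp
  have "k \<in> flows K vb (vb k)" using k by (simp add: flows_mem)
  hence "r k powr (1 / \<alpha> - 1) \<le> cc (vb k)" unfolding cc_def
    by (intro member_le_sum fin_flows) auto
  thus "ds k \<le> 1" unfolding ds_def using cc_pos vbV k by auto
next
  fix v assume "v \<in> {1..n}" thus "(\<Sum>k\<in>flows K vb v. ds k) = 1" by (rule ds_sum)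
qed

lemma fl_a: assumes v: "v \<in> {1..n}" and k: "k \<in> flows K vb v"
  shows "r k powr (1 - \<alpha>) * ds k powr (1 - \<alpha> - 1) = phi \<alpha> K vb r v"
proof -
  have kK: "k \<in> K" "vb k = v" using k by (auto simp: flows_mem)
  have rp: "r k > 0" using rpos kK by auto
  have cp: "cc v > 0" using cc_pos v by auto
  define q where "q = (1 / \<alpha> - 1) * (1 - \<alpha> - 1)"
  have e: "ds k powr (1 - \<alpha> - 1) = r k powr q / cc v powr (1 - \<alpha> - 1)"
    unfolding ds_def kK(2) q_def using rp cp by (simp add: powr_divide powr_powr)
  have q0: "(1 - \<alpha>) + q = 0" unfolding q_def using alpha by (simp add: field_simps)
  have rr: "r k powr (1 - \<alpha>) * r k powr q = 1" using powr_add[of "r k" "1 - \<alpha>" q, symmetric] q0 rp by simp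
  have "r k powr (1 - \<alpha>) * ds k powr (1 - \<alpha> - 1) = (r k powr (1 - \<alpha>) * r k powr q) / cc v powr (1 - \<alpha> - 1)"
    unfolding e by simp
  also have "\<dots> = 1 / cc v powr (1 - \<alpha> - 1)" using rr by simp
  also have "\<dots> = cc v powr (- (1 - \<alpha> - 1))" by (simp only: powr_minus_divide)
  also have "\<dots> = phi \<alpha> K vb r v" unfolding phi_eq by simp
  finally show ?thesis .
qed

lemma fl_b: assumes v: "v \<in> {1..n}" and k: "k \<in> flows K vb v"
  shows "r k powr (1 - \<alpha>) * ds k powr (1 - \<alpha>) = r k powr (1 / \<alpha> - 1) * cc v powr (\<alpha> - 1)"
proof -
  have kK: "k \<in> K" "vb k = v" using k by (auto simp: flows_mem)
  have rp: "r k > 0" using rpos kK by auto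
  have cp: "cc v > 0" using cc_pos v by auto
  define q where "q = (1 / \<alpha> - 1) * (1 - \<alpha>)"
  have e: "ds k powr (1 - \<alpha>) = r k powr q / cc v powr (1 - \<alpha>)"
    unfolding ds_def kK(2) q_def using rp cp by (simp add: powr_divide powr_powr)
  have q0: "(1 - \<alpha>) + q = 1 / \<alpha> - 1" unfolding q_def using alpha by (simp add: field_simps)
  have rr: "r k powr (1 - \<alpha>) * r k powr q = r k powr (1 / \<alpha> - 1)" using powr_add[of "r k" "1 - \<alpha>" q, symmetric] q0 by simp
  have "r k powr (1 - \<alpha>) * ds k powr (1 - \<alpha>) = (r k powr (1 - \<alpha>) * r k powr q) * (1 / cc v powr (1 - \<alpha>))"
    unfolding e by simp
  also have "1 / cc v powr (1 - \<alpha>) = cc v powr (- (1 - \<alpha>))" by (simp only: powr_minus_divide)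
  finally show ?thesis using rr by simp
qed

lemma sumU:
  assumes v: "v \<in> {1..n}" and t: "t > 0" and sd: "(\<Sum>k\<in>flows K vb v. \<delta> k) = 1"
  shows "(\<Sum>k\<in>flows K vb v. (r k * t) powr (1 - \<alpha>) * (ds k powr (1 - \<alpha>) / (1 - \<alpha>) + ds k powr (1 - \<alpha> - 1) * (\<delta> k - ds k)))
     = phi \<alpha> K vb r v * t powr (1 - \<alpha>) / (1 - \<alpha>)"
proof -
  have "(\<Sum>k\<in>flows K vb v. (r k * t) powr (1 - \<alpha>) * (ds k powr (1 - \<alpha>) / (1 - \<alpha>) + ds k powr (1 - \<alpha> - 1) * (\<delta> k - ds k)))
    = (\<Sum>k\<in>flows K vb v. t powr (1 - \<alpha>) * (r k powr (1 / \<alpha> - 1) * cc v powr (\<alpha> - 1) / (1 - \<alpha>) + phi \<alpha> K vb r v * (\<delta> k - ds k)))"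
  proof (intro sum.cong refl)
    fix k assume k: "k \<in> flows K vb v"
    have rp: "r k > 0" using rpos k by (auto simp: flows_mem)
    have "(r k * t) powr (1 - \<alpha>) = r k powr (1 - \<alpha>) * t powr (1 - \<alpha>)" using rp t by (simp add: powr_mult)
    thus "(r k * t) powr (1 - \<alpha>) * (ds k powr (1 - \<alpha>) / (1 - \<alpha>) + ds k powr (1 - \<alpha> - 1) * (\<delta> k - ds k)) =
         t powr (1 - \<alpha>) * (r k powr (1 / \<alpha> - 1) * cc v powr (\<alpha> - 1) / (1 - \<alpha>) + phi \<alpha> K vb r v * (\<delta> k - ds k))"
      using fl_a[OF v k] fl_b[OF v k] by (simp add: algebra_simps add_divide_distrib)
  qed
  also have "\<dots> = t powr (1 - \<alpha>) * ((\<Sum>k\<in>flows K vb v. r k powr (1 / \<alpha> - 1) * cc v powr (\<alpha> - 1) / (1 - \<alpha>)) + (\<Sum>k\<in>flows K vb v. phi \<alpha> K vb r v * (\<delta> k - ds k)))"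
    by (simp add: sum_distrib_left[symmetric] sum.distrib)
  also have "(\<Sum>k\<in>flows K vb v. r k powr (1 / \<alpha> - 1) * cc v powr (\<alpha> - 1) / (1 - \<alpha>)) = (\<Sum>k\<in>flows K vb v. r k powr (1 / \<alpha> - 1)) * cc v powr (\<alpha> - 1) / (1 - \<alpha>)"
    by (simp add: sum_divide_distrib sum_distrib_right)
  also have "(\<Sum>k\<in>flows K vb v. phi \<alpha> K vb r v * (\<delta> k - ds k)) = phi \<alpha> K vb r v * ((\<Sum>k\<in>flows K vb v. \<delta> k) - (\<Sum>k\<in>flows K vb v. ds k))"
    by (simp add: sum_distrib_left[symmetric] sum_subtractf)
  also have "(\<Sum>k\<in>flows K vb v. r k powr (1 / \<alpha> - 1)) = cc v" unfolding cc_def ..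
  also have "cc v * cc v powr (\<alpha> - 1) = phi \<alpha> K vb r v"
    unfolding phi_eq using cc_pos[OF v] by (simp add: powr_diff)
  finally show ?thesis using sd ds_sum[OF v] by simp
qed

end



context setting begin

lemma vert:
  assumes v: "v \<in> {1..n}" and t: "t > 0" and nn: "\<forall>k\<in>flows K vb v. \<delta> k \<ge> 0"
    and pos: "\<alpha> > 1 \<Longrightarrow> \<forall>k\<in>flows K vb v. \<delta> k > 0" and sd: "(\<Sum>k\<in>flows K vb v. \<delta> k) = 1"
  shows "(\<Sum>k\<in>flows K vb v. (r k * t * \<delta> k) powr (1 - \<alpha>) / (1 - \<alpha>)) \<le> phi \<alpha> K vb r v * t powr (1 - \<alpha>) / (1 - \<alpha>)"
    and "(\<Sum>k\<in>flows K vb v. (r k * t * \<delta> k) powr (1 - \<alpha>) / (1 - \<alpha>)) = phi \<alpha> K vb r v * t powr (1 - \<alpha>) / (1 - \<alpha>)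
          \<Longrightarrow> \<forall>k\<in>flows K vb v. \<delta> k = ds k"
proof -
  define T where "T k = (r k * t * \<delta> k) powr (1 - \<alpha>) / (1 - \<alpha>)" for k
  define U where "U k = (r k * t) powr (1 - \<alpha>) * (ds k powr (1 - \<alpha>) / (1 - \<alpha>) + ds k powr (1 - \<alpha> - 1) * (\<delta> k - ds k))" for k
  have b: "1 - \<alpha> < 1" "1 - \<alpha> \<noteq> 0" using alpha by auto
  have TU: "T k \<le> U k" and TUs: "\<delta> k \<noteq> ds k \<Longrightarrow> T k < U k" if k: "k \<in> flows K vb v" for k
  proof -
    have kK: "k \<in> K" using k by (auto simp: flows_mem)
    have rt: "r k * t > 0" using rpos kK t by auto
    have d0: "\<delta> k \<ge> 0" using nn k by auto
    have d1: "1 - \<alpha> < 0 \<Longrightarrow> \<delta> k > 0" using pos k by auto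
    have Te: "T k = (r k * t) powr (1 - \<alpha>) * (\<delta> k powr (1 - \<alpha>) / (1 - \<alpha>))"
      unfolding T_def using rt d0 by (simp add: powr_mult)
    have pp: "(r k * t) powr (1 - \<alpha>) > 0" using rt powr_gt_zero by (metis order_less_irrefl)
    show "T k \<le> U k" unfolding Te U_def
      using tangent_le[OF b ds_pos[OF kK] d0 d1] pp by (intro mult_left_mono) auto
    assume ne: "\<delta> k \<noteq> ds k"
    show "T k < U k" unfolding Te U_def
      using tangent[OF b ds_pos[OF kK] d0 d1 ne] pp by (intro mult_strict_left_mono) auto
  qed
  have sU: "(\<Sum>k\<in>flows K vb v. U k) = phi \<alpha> K vb r v * t powr (1 - \<alpha>) / (1 - \<alpha>)"
    unfolding U_def using sumU[OF v t sd] .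
  show "(\<Sum>k\<in>flows K vb v. (r k * t * \<delta> k) powr (1 - \<alpha>) / (1 - \<alpha>)) \<le> phi \<alpha> K vb r v * t powr (1 - \<alpha>) / (1 - \<alpha>)"
    unfolding sU[symmetric] T_def[symmetric] using TU by (intro sum_mono) auto
  assume eq: "(\<Sum>k\<in>flows K vb v. (r k * t * \<delta> k) powr (1 - \<alpha>) / (1 - \<alpha>)) = phi \<alpha> K vb r v * t powr (1 - \<alpha>) / (1 - \<alpha>)"
  hence "(\<Sum>k\<in>flows K vb v. U k - T k) = 0"
    unfolding sum_subtractf sU T_def by simp
  hence "\<forall>k\<in>flows K vb v. U k - T k = 0"
    using sum_nonneg_eq_0_iff[OF fin_flows] TU by (simp add: sum_nonneg_eq_0_iff[OF fin_flows])
  thus "\<forall>k\<in>flows K vb v. \<delta> k = ds k" using TUs by fastforce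
qed

lemma vert_ds:
  assumes v: "v \<in> {1..n}" and t: "t > 0"
  shows "(\<Sum>k\<in>flows K vb v. (r k * t * ds k) powr (1 - \<alpha>) / (1 - \<alpha>)) = phi \<alpha> K vb r v * t powr (1 - \<alpha>) / (1 - \<alpha>)"
proof -
  have "(\<Sum>k\<in>flows K vb v. (r k * t * ds k) powr (1 - \<alpha>) / (1 - \<alpha>)) =
        (\<Sum>k\<in>flows K vb v. (r k * t) powr (1 - \<alpha>) * (ds k powr (1 - \<alpha>) / (1 - \<alpha>) + ds k powr (1 - \<alpha> - 1) * (ds k - ds k)))"
  proof (intro sum.cong refl)
    fix k assume k: "k \<in> flows K vb v"
    have kK: "k \<in> K" using k by (auto simp: flows_mem)
    have "r k * t > 0" using rpos kK t by auto
    thus "(r k * t * ds k) powr (1 - \<alpha>) / (1 - \<alpha>) = (r k * t) powr (1 - \<alpha>) * (ds k powr (1 - \<alpha>) / (1 - \<alpha>) + ds k powr (1 - \<alpha> - 1) * (ds k - ds k))"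
      using ds_pos[OF kK] by (simp add: powr_mult)
  qed
  also have "\<dots> = phi \<alpha> K vb r v * t powr (1 - \<alpha>) / (1 - \<alpha>)" using sumU[OF v t ds_sum[OF v]] .
  finally show ?thesis .
qed

lemma convZ_nonneg: "in_convZ n E \<gamma> \<Longrightarrow> v \<in> {1..n} \<Longrightarrow> \<gamma> v \<ge> 0"
proof -
  assume g: "in_convZ n E \<gamma>" and v: "v \<in> {1..n}"
  obtain mu' where m: "\<forall>z\<in>Zset n E. mu' z \<ge> 0"
    "\<forall>v\<in>{1..n}. \<gamma> v = (\<Sum>z\<in>Zset n E. mu' z * z v)" using g unfolding in_convZ_def by auto
  have "\<forall>z\<in>Zset n E. z v \<ge> 0"
  proof
    fix z assume "z \<in> Zset n E"
    hence "z v \<in> {0, 1}" using v unfolding Zset_def by blast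
    thus "z v \<ge> 0" by auto
  qed
  hence "(\<Sum>z\<in>Zset n E. mu' z * z v) \<ge> 0" using m(1) by (intro sum_nonneg) auto
  thus ?thesis using m(2) v by auto
qed

lemma wsum_bound:
  assumes g: "in_convZ n E \<gamma>"
  shows "(\<Sum>v\<in>{1..n}. w v * \<gamma> v) \<le> w 1"
proof -
  obtain mu' where m: "\<forall>z\<in>Zset n E. mu' z \<ge> 0" "(\<Sum>z\<in>Zset n E. mu' z) = 1"
    "\<forall>v\<in>{1..n}. \<gamma> v = (\<Sum>z\<in>Zset n E. mu' z * z v)" using g unfolding in_convZ_def by auto
  have "(\<Sum>v\<in>{1..n}. w v * \<gamma> v) = (\<Sum>v\<in>{1..n}. \<Sum>z\<in>Zset n E. mu' z * (w v * z v))"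
    using m(3) by (simp add: sum_distrib_left algebra_simps)
  also have "\<dots> = (\<Sum>z\<in>Zset n E. mu' z * (\<Sum>v\<in>{1..n}. w v * z v))"
    by (subst sum.swap) (simp add: sum_distrib_left)
  also have "\<dots> \<le> (\<Sum>z\<in>Zset n E. mu' z * w 1)"
  proof (rule sum_mono)
    fix z assume z: "z \<in> Zset n E"
    have "(\<Sum>v\<in>{1..n}. w v * z v) \<le> w 1"
      using antichain_bound[OF z, of 1] n1 unfolding desc_root by auto
    thus "mu' z * (\<Sum>v\<in>{1..n}. w v * z v) \<le> mu' z * w 1" using m(1) z by (intro mult_left_mono) auto
  qed
  also have "\<dots> = w 1" using m(2) by (simp add: sum_distrib_right[symmetric])
  finally show ?thesis .
qed

lemma Gineq:
  assumes g: "in_convZ n E \<gamma>" and pos: "\<alpha> > 1 \<Longrightarrow> \<forall>v\<in>{1..n}. \<gamma> v > 0"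
  shows "(\<Sum>v\<in>{1..n}. phi \<alpha> K vb r v * \<gamma> v powr (1 - \<alpha>) / (1 - \<alpha>)) \<le> (\<Sum>v\<in>{1..n}. phi \<alpha> K vb r v * gs v powr (1 - \<alpha>) / (1 - \<alpha>))"
    and "(\<Sum>v\<in>{1..n}. phi \<alpha> K vb r v * \<gamma> v powr (1 - \<alpha>) / (1 - \<alpha>)) = (\<Sum>v\<in>{1..n}. phi \<alpha> K vb r v * gs v powr (1 - \<alpha>) / (1 - \<alpha>))
       \<Longrightarrow> \<forall>v\<in>{1..n}. \<gamma> v = gs v"
proof -
  define D where "D v = phi \<alpha> K vb r v * gs v powr (1 - \<alpha>) / (1 - \<alpha>) + w v * (\<gamma> v - gs v) - phi \<alpha> K vb r v * \<gamma> v powr (1 - \<alpha>) / (1 - \<alpha>)" for v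
  have b: "1 - \<alpha> < 1" "1 - \<alpha> \<noteq> 0" using alpha by auto
  have D0: "D v \<ge> 0" and Ds: "\<gamma> v \<noteq> gs v \<Longrightarrow> D v > 0" if v: "v \<in> {1..n}" for v
  proof -
    have y0: "\<gamma> v \<ge> 0" using convZ_nonneg[OF g v] .
    have y1: "1 - \<alpha> < 0 \<Longrightarrow> \<gamma> v > 0" using pos v by auto
    have we: "w v = phi \<alpha> K vb r v * gs v powr (1 - \<alpha> - 1)" unfolding w_def by simp
    have ph: "phi \<alpha> K vb r v > 0" using phi_pos[OF v] .
    have De: "D v = phi \<alpha> K vb r v * (gs v powr (1 - \<alpha>) / (1 - \<alpha>) + gs v powr (1 - \<alpha> - 1) * (\<gamma> v - gs v) - \<gamma> v powr (1 - \<alpha>) / (1 - \<alpha>))"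
      unfolding D_def we by (simp add: algebra_simps)
    show "D v \<ge> 0" unfolding De using tangent_le[OF b gs_pos[OF v] y0 y1] ph by simp
    assume "\<gamma> v \<noteq> gs v"
    thus "D v > 0" unfolding De using tangent[OF b gs_pos[OF v] y0 y1] ph by simp
  qed
  have "(\<Sum>v\<in>{1..n}. D v) = (\<Sum>v\<in>{1..n}. phi \<alpha> K vb r v * gs v powr (1 - \<alpha>) / (1 - \<alpha>)) + ((\<Sum>v\<in>{1..n}. w v * \<gamma> v) - (\<Sum>v\<in>{1..n}. w v * gs v))
      - (\<Sum>v\<in>{1..n}. phi \<alpha> K vb r v * \<gamma> v powr (1 - \<alpha>) / (1 - \<alpha>))"
    unfolding D_def by (simp add: sum.distrib sum_subtractf algebra_simps)
  hence sD: "(\<Sum>v\<in>{1..n}. D v) \<le> (\<Sum>v\<in>{1..n}. phi \<alpha> K vb r v * gs v powr (1 - \<alpha>) / (1 - \<alpha>)) - (\<Sum>v\<in>{1..n}. phi \<alpha> K vb r v * \<gamma> v powr (1 - \<alpha>) / (1 - \<alpha>))"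
    using wsum_bound[OF g] total_w by simp
  have sD0: "(\<Sum>v\<in>{1..n}. D v) \<ge> 0" using D0 by (intro sum_nonneg) auto
  show "(\<Sum>v\<in>{1..n}. phi \<alpha> K vb r v * \<gamma> v powr (1 - \<alpha>) / (1 - \<alpha>)) \<le> (\<Sum>v\<in>{1..n}. phi \<alpha> K vb r v * gs v powr (1 - \<alpha>) / (1 - \<alpha>))"
    using sD sD0 by simp
  assume "(\<Sum>v\<in>{1..n}. phi \<alpha> K vb r v * \<gamma> v powr (1 - \<alpha>) / (1 - \<alpha>)) = (\<Sum>v\<in>{1..n}. phi \<alpha> K vb r v * gs v powr (1 - \<alpha>) / (1 - \<alpha>))"
  hence "(\<Sum>v\<in>{1..n}. D v) = 0" using sD sD0 by simp
  hence "\<forall>v\<in>{1..n}. D v = 0" using D0 sum_nonneg_eq_0_iff[of "{1..n}" D] by auto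
  thus "\<forall>v\<in>{1..n}. \<gamma> v = gs v" using Ds by fastforce
qed

end



lemma sum_minf:
  fixes f :: "'a \<Rightarrow> ereal"
  assumes "finite A" "a \<in> A" "f a = -\<infinity>" "\<forall>x\<in>A. f x \<noteq> \<infinity>"
  shows "sum f A = -\<infinity>"
proof -
  have "sum f A = f a + sum f (A - {a})" using assms by (simp add: sum.remove)
  moreover have "sum f (A - {a}) \<noteq> \<infinity>" using assms by (simp add: sum_Pinfty)
  ultimately show ?thesis using assms(3) by simp
qed

context setting begin

definition "RR \<delta> \<gamma> = (\<Sum>v\<in>{1..n}. \<Sum>k\<in>flows K vb v. (r k * \<gamma> v * \<delta> k) powr (1 - \<alpha>) / (1 - \<alpha>))"
definition "GG \<gamma> = (\<Sum>v\<in>{1..n}. phi \<alpha> K vb r v * \<gamma> v powr (1 - \<alpha>) / (1 - \<alpha>))"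

lemma obj_real:
  assumes "\<alpha> < 1 \<or> (\<forall>v\<in>{1..n}. \<forall>k\<in>flows K vb v. r k * \<gamma> v * \<delta> k \<noteq> 0)"
  shows "objective \<alpha> n K vb r \<delta> \<gamma> = ereal (RR \<delta> \<gamma>)"
proof -
  have "objective \<alpha> n K vb r \<delta> \<gamma> = (\<Sum>v\<in>{1..n}. \<Sum>k\<in>flows K vb v. ereal ((r k * \<gamma> v * \<delta> k) powr (1 - \<alpha>) / (1 - \<alpha>)))"
    unfolding objective_def f_alpha_def using assms by (intro sum.cong refl) auto
  thus ?thesis unfolding RR_def by simp
qed

lemma obj_minf:
  assumes "\<alpha> > 1" "v \<in> {1..n}" "k \<in> flows K vb v" "r k * \<gamma> v * \<delta> k = 0"
  shows "objective \<alpha> n K vb r \<delta> \<gamma> = -\<infinity>"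
  unfolding objective_def
proof (rule sum_minf)
  show "(\<Sum>k\<in>flows K vb v. f_alpha \<alpha> (r k * \<gamma> v * \<delta> k)) = -\<infinity>"
    using assms fin_flows by (intro sum_minf) (auto simp: f_alpha_def)
  show "\<forall>x\<in>{1..n}. (\<Sum>k\<in>flows K vb x. f_alpha \<alpha> (r k * \<gamma> x * \<delta> k)) \<noteq> \<infinity>"
    using fin_flows by (auto simp: sum_Pinfty f_alpha_def)
qed (use assms in auto)

lemma RR_opt: "RR ds gs = GG gs"
  unfolding RR_def GG_def using vert_ds gs_pos by (intro sum.cong refl) auto

lemma core:
  assumes d: "in_Delta n K vb \<delta>" and g: "in_convZ n E \<gamma>"
    and pos: "\<alpha> > 1 \<Longrightarrow> (\<forall>v\<in>{1..n}. \<gamma> v > 0) \<and> (\<forall>k\<in>K. \<delta> k > 0)"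
  shows "RR \<delta> \<gamma> \<le> RR ds gs"
    and "RR \<delta> \<gamma> = RR ds gs \<Longrightarrow> (\<forall>k\<in>K. \<delta> k = ds k) \<and> (\<forall>v\<in>{1..n}. \<gamma> v = gs v)"
proof -
  define Rv where "Rv v = (\<Sum>k\<in>flows K vb v. (r k * \<gamma> v * \<delta> k) powr (1 - \<alpha>) / (1 - \<alpha>))" for v
  define Gv where "Gv v = phi \<alpha> K vb r v * \<gamma> v powr (1 - \<alpha>) / (1 - \<alpha>)" for v
  have dK: "\<forall>k\<in>K. 0 \<le> \<delta> k" and dS: "\<forall>v\<in>{1..n}. (\<Sum>k\<in>flows K vb v. \<delta> k) = 1"
    using d unfolding in_Delta_def by auto
  have dd: "\<forall>k\<in>flows K vb v. \<delta> k \<ge> 0" "(\<Sum>k\<in>flows K vb v. \<delta> k) = 1" if "v \<in> {1..n}" for v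
    using dK dS that by (auto simp: flows_mem)
  have dpos: "\<alpha> > 1 \<Longrightarrow> \<forall>k\<in>flows K vb v. \<delta> k > 0" for v using pos by (auto simp: flows_mem)
  have RG: "Rv v \<le> Gv v" and RGe: "Rv v = Gv v \<Longrightarrow> \<gamma> v > 0 \<Longrightarrow> \<forall>k\<in>flows K vb v. \<delta> k = ds k"
    if v: "v \<in> {1..n}" for v
  proof -
    have g0: "\<gamma> v \<ge> 0" using convZ_nonneg[OF g v] .
    show "Rv v \<le> Gv v"
    proof (cases "\<gamma> v = 0")
      case True thus ?thesis unfolding Rv_def Gv_def by simp
    next
      case False
      hence gp: "\<gamma> v > 0" using g0 by auto
      show ?thesis unfolding Rv_def Gv_def by (rule vert(1)[OF v gp dd(1)[OF v] dpos dd(2)[OF v]])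
    qed
    assume e: "Rv v = Gv v" and gp: "\<gamma> v > 0"
    have e': "(\<Sum>k\<in>flows K vb v. (r k * \<gamma> v * \<delta> k) powr (1 - \<alpha>) / (1 - \<alpha>)) = phi \<alpha> K vb r v * \<gamma> v powr (1 - \<alpha>) / (1 - \<alpha>)"
      using e unfolding Rv_def Gv_def .
    show "\<forall>k\<in>flows K vb v. \<delta> k = ds k"
      by (rule vert(2)[OF v gp dd(1)[OF v] dpos dd(2)[OF v] e'])
  qed
  have RGs: "RR \<delta> \<gamma> \<le> GG \<gamma>" unfolding RR_def GG_def Rv_def[symmetric] Gv_def[symmetric]
    by (rule sum_mono) (rule RG, simp)
  have gpos: "\<alpha> > 1 \<Longrightarrow> \<forall>v\<in>{1..n}. \<gamma> v > 0" using pos by blast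
  have GGs: "GG \<gamma> \<le> GG gs" unfolding GG_def by (rule Gineq(1)[OF g gpos])
  show "RR \<delta> \<gamma> \<le> RR ds gs" using RGs GGs RR_opt by linarith
  assume eq: "RR \<delta> \<gamma> = RR ds gs"
  hence e1: "GG \<gamma> = GG gs" using RGs GGs RR_opt by linarith
  have e1': "(\<Sum>v\<in>{1..n}. phi \<alpha> K vb r v * \<gamma> v powr (1 - \<alpha>) / (1 - \<alpha>)) = (\<Sum>v\<in>{1..n}. phi \<alpha> K vb r v * gs v powr (1 - \<alpha>) / (1 - \<alpha>))"
    using e1 unfolding GG_def .
  have gg: "\<forall>v\<in>{1..n}. \<gamma> v = gs v" by (rule Gineq(2)[OF g gpos e1'])
  have "RR \<delta> \<gamma> = GG \<gamma>" using eq e1 RR_opt by linarith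
  hence "(\<Sum>v\<in>{1..n}. Rv v) = (\<Sum>v\<in>{1..n}. Gv v)" unfolding RR_def GG_def Rv_def[symmetric] Gv_def[symmetric] .
  hence "(\<Sum>v\<in>{1..n}. Gv v - Rv v) = 0" by (simp add: sum_subtractf)
  moreover have "\<forall>v\<in>{1..n}. Gv v - Rv v \<ge> 0" using RG by simp
  ultimately have z: "\<forall>v\<in>{1..n}. Gv v - Rv v = 0" using sum_nonneg_eq_0_iff[of "{1..n}" "\<lambda>v. Gv v - Rv v"] by simp
  have dv: "\<forall>v\<in>{1..n}. \<forall>k\<in>flows K vb v. \<delta> k = ds k"
  proof (intro ballI)
    fix v assume v: "v \<in> {1..n}"
    have "Rv v = Gv v" using z v by auto
    moreover have "\<gamma> v > 0" using gg gs_pos v by auto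
    ultimately have "\<forall>k\<in>flows K vb v. \<delta> k = ds k" using RGe[OF v] by blast
    thus "\<And>k. k \<in> flows K vb v \<Longrightarrow> \<delta> k = ds k" by blast
  qed
  have "\<forall>k\<in>K. \<delta> k = ds k"
  proof
    fix k assume k: "k \<in> K"
    thus "\<delta> k = ds k" using dv vbV by (auto simp: flows_mem)
  qed
  thus "(\<forall>k\<in>K. \<delta> k = ds k) \<and> (\<forall>v\<in>{1..n}. \<gamma> v = gs v)" using gg by simp
qed

lemma obj_opt: "objective \<alpha> n K vb r ds gs = ereal (RR ds gs)"
proof (rule obj_real)
  show "\<alpha> < 1 \<or> (\<forall>v\<in>{1..n}. \<forall>k\<in>flows K vb v. r k * gs v * ds k \<noteq> 0)"
  proof (intro disjI2 ballI)
    fix v k assume v: "v \<in> {1..n}" and k: "k \<in> flows K vb v"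
    hence kK: "k \<in> K" "vb k = v" by (auto simp: flows_mem)
    have "r k > 0" using rpos kK by auto
    moreover have "gs v > 0" using gs_pos v by auto
    moreover have "ds k > 0" using ds_pos kK by auto
    ultimately show "r k * gs v * ds k \<noteq> 0" by simp
  qed
qed

lemma main:
  "in_Delta n K vb ds \<and> in_convZ n E gs
   \<and> (\<forall>\<delta> \<gamma>. in_Delta n K vb \<delta> \<and> in_convZ n E \<gamma> \<longrightarrow>
         objective \<alpha> n K vb r \<delta> \<gamma> \<le> objective \<alpha> n K vb r ds gs
       \<and> (objective \<alpha> n K vb r \<delta> \<gamma> = objective \<alpha> n K vb r ds gs \<longrightarrow>
           (\<forall>k\<in>K. \<delta> k = ds k) \<and> (\<forall>v\<in>{1..n}. \<gamma> v = gs v)))"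
proof (intro conjI Delta_ds convZ allI impI)
  fix \<delta> \<gamma> assume a: "in_Delta n K vb \<delta> \<and> in_convZ n E \<gamma>"
  hence d: "in_Delta n K vb \<delta>" and g: "in_convZ n E \<gamma>" by auto
  have "objective \<alpha> n K vb r \<delta> \<gamma> \<le> objective \<alpha> n K vb r ds gs \<and>
        (objective \<alpha> n K vb r \<delta> \<gamma> = objective \<alpha> n K vb r ds gs \<longrightarrow>
           (\<forall>k\<in>K. \<delta> k = ds k) \<and> (\<forall>v\<in>{1..n}. \<gamma> v = gs v))"
  proof (cases "\<alpha> < 1 \<or> (\<forall>v\<in>{1..n}. \<forall>k\<in>flows K vb v. r k * \<gamma> v * \<delta> k \<noteq> 0)")
    case True
    have pos: "(\<forall>v\<in>{1..n}. \<gamma> v > 0) \<and> (\<forall>k\<in>K. \<delta> k > 0)" if al: "\<alpha> > 1"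
    proof
      have nz: "\<forall>v\<in>{1..n}. \<forall>k\<in>flows K vb v. r k * \<gamma> v * \<delta> k \<noteq> 0" using True al by auto
      show "\<forall>v\<in>{1..n}. \<gamma> v > 0"
      proof
        fix v assume v: "v \<in> {1..n}"
        obtain k where "k \<in> flows K vb v" using nonempty v by blast
        hence "\<gamma> v \<noteq> 0" using nz v by auto
        thus "\<gamma> v > 0" using convZ_nonneg[OF g v] by auto
      qed
      show "\<forall>k\<in>K. \<delta> k > 0"
      proof
        fix k assume k: "k \<in> K"
        hence "k \<in> flows K vb (vb k)" "vb k \<in> {1..n}" using vbV by (auto simp: flows_mem)
        hence "r k * \<gamma> (vb k) * \<delta> k \<noteq> 0" using nz by blast
        hence "\<delta> k \<noteq> 0" by auto
        moreover have "0 \<le> \<delta> k" using d k unfolding in_Delta_def by blast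
        ultimately show "\<delta> k > 0" by simp
      qed
    qed
    have c1: "RR \<delta> \<gamma> \<le> RR ds gs" by (rule core(1)[OF d g pos])
    have c2: "RR \<delta> \<gamma> = RR ds gs \<Longrightarrow> (\<forall>k\<in>K. \<delta> k = ds k) \<and> (\<forall>v\<in>{1..n}. \<gamma> v = gs v)"
      by (rule core(2)[OF d g pos])
    show ?thesis unfolding obj_real[OF True] obj_opt using c1 c2 by simp
  next
    case False
    then obtain v k where vk: "\<alpha> > 1" "v \<in> {1..n}" "k \<in> flows K vb v" "r k * \<gamma> v * \<delta> k = 0"
      using alpha by force
    have "objective \<alpha> n K vb r \<delta> \<gamma> = -\<infinity>" using obj_minf[where v=v and k=k and \<gamma>=\<gamma> and \<delta>=\<delta>] vk by blast
    thus ?thesis unfolding obj_opt by simp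
  qed
  thus "objective \<alpha> n K vb r \<delta> \<gamma> \<le> objective \<alpha> n K vb r ds gs"
       "objective \<alpha> n K vb r \<delta> \<gamma> = objective \<alpha> n K vb r ds gs \<Longrightarrow> \<forall>k\<in>K. \<delta> k = ds k"
       "objective \<alpha> n K vb r \<delta> \<gamma> = objective \<alpha> n K vb r ds gs \<Longrightarrow> \<forall>v\<in>{1..n}. \<gamma> v = gs v"
    by blast+
qed

end

theorem theorem1:
  fixes n :: nat and E :: "(nat \<times> nat) set" and \<alpha> :: real
    and K :: "'k set" and r :: "'k \<Rightarrow> real" and vb :: "'k \<Rightarrow> nat"
    and \<theta> \<kappa> :: "nat \<Rightarrow> real"
  assumes tree: "rooted_tree n E"
    and alpha: "\<alpha> > 0" "\<alpha> \<noteq> 1"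
    and finK: "finite K"
    and rpos: "\<forall>k\<in>K. r k > 0"
    and vbV: "\<forall>k\<in>K. vb k \<in> {1..n}"
    and nonempty: "\<forall>v\<in>{1..n}. flows K vb v \<noteq> {}"
    and kappa_def: "\<forall>v\<in>{1..n}. \<kappa> v = 1 / (1 + ((1 - \<alpha>) / phi \<alpha> K vb r v
                       * (\<Sum>v'\<in>children E v. \<theta> v')) powr (1 / \<alpha>))"
    and theta_def: "\<forall>v\<in>{1..n}. \<theta> v = \<kappa> v powr (1 - \<alpha>) * phi \<alpha> K vb r v / (1 - \<alpha>)
                       + (1 - \<kappa> v) powr (1 - \<alpha>) * (\<Sum>v'\<in>children E v. \<theta> v')"
  shows "let \<delta>s = (\<lambda>k. r k powr (1 / \<alpha> - 1) / (\<Sum>k'\<in>flows K vb (vb k). r k' powr (1 / \<alpha> - 1)));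
             \<gamma>s = (\<lambda>v. \<kappa> v * (\<Prod>v'\<in>anc E v. 1 - \<kappa> v'))
         in in_Delta n K vb \<delta>s \<and> in_convZ n E \<gamma>s
            \<and> (\<forall>\<delta> \<gamma>. in_Delta n K vb \<delta> \<and> in_convZ n E \<gamma> \<longrightarrow>
                   objective \<alpha> n K vb r \<delta> \<gamma> \<le> objective \<alpha> n K vb r \<delta>s \<gamma>s
                 \<and> (objective \<alpha> n K vb r \<delta> \<gamma> = objective \<alpha> n K vb r \<delta>s \<gamma>s \<longrightarrow>
                     (\<forall>k\<in>K. \<delta> k = \<delta>s k) \<and> (\<forall>v\<in>{1..n}. \<gamma> v = \<gamma>s v)))"
proof -
  have rt: "rtree n E" unfolding rtree_def by (rule tree)
  interpret S: setting n E \<alpha> K r vb \<theta> \<kappa>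
    by (intro setting.intro setting_axioms.intro rt) (fact+)
  have e1: "(\<lambda>k. r k powr (1 / \<alpha> - 1) / (\<Sum>k'\<in>flows K vb (vb k). r k' powr (1 / \<alpha> - 1))) = S.ds"
    unfolding S.ds_def S.cc_def ..
  have e2: "(\<lambda>v. \<kappa> v * (\<Prod>v'\<in>anc E v. 1 - \<kappa> v')) = S.gs"
    unfolding S.gs_def S.Pr_def ..
  show ?thesis unfolding Let_def e1 e2 by (rule S.main)
qed



end
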